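(* Let $\mathfrak{H}=\mathfrak{h}_0\otimes\Gamma(\mathfrak{K}\otimes L^2[0,\infty))$ and, for $t\ge0$, let $\mathfrak{A}_{t]}$ be the von Neumann algebra of bounded operators acting trivially on the future factor $\Gamma(\mathfrak{K}\otimes L^2(t,\infty))$. Let $Z$ be an adapted, self-commuting quantum stochastic process on the Fock space, and let $\mathfrak{Z}_{t]}=\mathrm{vN}\{Z(s):0\le s\le t\}$. Let $U^{[Z]}$ be an adapted unitary process (a controlled quantum flow, i.e. the solution of a Hudson–Parthasarathy QSDE whose $SLH$-coefficients are adapted processes with values in $\mathfrak{Z}_{t]}'$ at each time $t$), and set $Y(t)=U^{[Z]}(t)^\ast Z(t)U^{[Z]}(t)$ and $\mathfrak{Y}_{t]}=U^{[Z]}(t)^\ast\,\mathfrak{Z}_{t]}\,U^{[Z]}(t)$. Let $F$ be an adapted process causally controlled by $Z$, i.e. $F(t)\in\mathfrak{Z}_{t]}'$ for each $t$. Then the process $\tilde F$ defined by $\tilde F(t)=U^{[Z]}(t)^\ast F(t)\,U^{[Z]}(t)$ is an adapted process causally controlled by $Y$, i.e. $\tilde F(t)\in\mathfrak{Y}_{t]}'$ for each $t$.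
   Context: For a von Neumann subalgebra $\mathfrak{B}$ of the algebra $\mathfrak{A}$ of bounded operators on $\mathfrak{H}$, the commutant is $\mathfrak{B}'=\{A\in\mathfrak{A}:[A,B]=0\ \forall B\in\mathfrak{B}\}$; $\mathrm{vN}\{\cdots\}$ denotes the von Neumann algebra generated by the given observables. A process $F$ is adapted if $F(t)\in\mathfrak{A}_{t]}$ for each $t$. A process is said to be causally controlled by a commutative process $Z$ if its value at each time $t$ lies in $\mathfrak{Z}_{t]}'$. *)

theory Defs
  imports Complex_Main
begin

text \<open>The carrier type 'a plays the role of the algebra of all bounded operators
on the Hilbert space H.\<close>

definition star_ring :: "('a::ring_1 \<Rightarrow> 'a) \<Rightarrow> bool" where
  "star_ring adj \<longleftrightarrow>
     (\<forall>x y. adj (x + y) = adj x + adj y) \<and>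
     (\<forall>x y. adj (x * y) = adj y * adj x) \<and>
     (\<forall>x. adj (adj x) = x) \<and> adj 1 = 1"

definition commutant :: "'a::ring_1 set \<Rightarrow> 'a set" where
  "commutant S = {A. \<forall>B\<in>S. A * B = B * A}"

text \<open>Von Neumann algebra generated by a set S (bicommutant theorem):
the double commutant of S together with the adjoints of its elements.\<close>
definition vN :: "('a::ring_1 \<Rightarrow> 'a) \<Rightarrow> 'a set \<Rightarrow> 'a set" where
  "vN adj S = commutant (commutant (S \<union> adj ` S))"

definition vN_subalgebra :: "('a::ring_1 \<Rightarrow> 'a) \<Rightarrow> 'a set \<Rightarrow> bool" where
  "vN_subalgebra adj B \<longleftrightarrow> adj ` B \<subseteq> B \<and> commutant (commutant B) = B"

definition unitary :: "('a::ring_1 \<Rightarrow> 'a) \<Rightarrow> 'a \<Rightarrow> bool" where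
  "unitary adj U \<longleftrightarrow> adj U * U = 1 \<and> U * adj U = 1"

text \<open>Filtration A t = algebra of operators acting trivially on the future
Fock factor; a process is adapted if X t \<in> A t for all t \<ge> 0.\<close>
definition adapted :: "(real \<Rightarrow> 'a set) \<Rightarrow> (real \<Rightarrow> 'a) \<Rightarrow> bool" where
  "adapted A X \<longleftrightarrow> (\<forall>t\<ge>0. X t \<in> A t)"

definition gen_alg :: "('a::ring_1 \<Rightarrow> 'a) \<Rightarrow> (real \<Rightarrow> 'a) \<Rightarrow> real \<Rightarrow> 'a set" where
  "gen_alg adj Z t = vN adj {Z s | s. 0 \<le> s \<and> s \<le> t}"

end

theory Submission
  imports Defs
begin

theorem mainTheorem2:
  fixes adj :: "'a::ring_1 \<Rightarrow> 'a"
    and A :: "real \<Rightarrow> 'a set"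
    and Z U F :: "real \<Rightarrow> 'a"
  assumes star: "star_ring adj"
    and filt_vN: "\<And>t. 0 \<le> t \<Longrightarrow> vN_subalgebra adj (A t)"
    and filt_mono: "\<And>s t. 0 \<le> s \<Longrightarrow> s \<le> t \<Longrightarrow> A s \<subseteq> A t"
    and Z_adapted: "adapted A Z"
    and Z_comm: "\<And>s t. 0 \<le> s \<Longrightarrow> 0 \<le> t \<Longrightarrow> Z s * Z t = Z t * Z s"
    and U_adapted: "adapted A U"
    and U_unitary: "\<And>t. 0 \<le> t \<Longrightarrow> unitary adj (U t)"
    and F_adapted: "adapted A F"
    and F_controlled: "\<And>t. 0 \<le> t \<Longrightarrow> F t \<in> commutant (gen_alg adj Z t)"
  shows "adapted A (\<lambda>t. adj (U t) * F t * U t) \<and>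
         (\<forall>t\<ge>0. adj (U t) * F t * U t \<in>
                  commutant ((\<lambda>X. adj (U t) * X * U t) ` gen_alg adj Z t))"
proof -
  have sa: "adj x = x \<Longrightarrow> True" for x by simp
  have adjmul: "\<And>x y. adj (x * y) = adj y * adj x" using star unfolding star_ring_def by blast
  have mulc: "a * b \<in> commutant S" if "a \<in> commutant S" "b \<in> commutant S" for a b and S :: "'a set"
    using that unfolding commutant_def by (auto simp: mult.assoc) (metis mult.assoc)
  have part1: "adapted A (\<lambda>t. adj (U t) * F t * U t)"
    unfolding adapted_def
  proof (intro allI impI)
    fix t :: real assume t: "0 \<le> t"
    have v: "adj ` A t \<subseteq> A t" "commutant (commutant (A t)) = A t"
      using filt_vN[OF t] unfolding vN_subalgebra_def by auto
    have u: "U t \<in> A t" and f: "F t \<in> A t" using U_adapted F_adapted t unfolding adapted_def by auto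
    have ua: "adj (U t) \<in> A t" using v(1) u by blast
    have "adj (U t) * F t * U t \<in> commutant (commutant (A t))"
      using mulc[OF mulc] ua f u v(2) by metis
    then show "adj (U t) * F t * U t \<in> A t" using v(2) by simp
  qed
  have part2: "\<forall>t\<ge>0. adj (U t) * F t * U t \<in>
                  commutant ((\<lambda>X. adj (U t) * X * U t) ` gen_alg adj Z t)"
  proof (intro allI impI)
    fix t :: real assume t: "0 \<le> t"
    have uu: "U t * adj (U t) = 1" using U_unitary[OF t] unfolding unitary_def by blast
    show "adj (U t) * F t * U t \<in> commutant ((\<lambda>X. adj (U t) * X * U t) ` gen_alg adj Z t)"
      unfolding commutant_def
    proof (intro CollectI ballI)
      fix B assume "B \<in> (\<lambda>X. adj (U t) * X * U t) ` gen_alg adj Z t"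
      then obtain X where X: "X \<in> gen_alg adj Z t" and B: "B = adj (U t) * X * U t" by blast
      have fx: "F t * X = X * F t" using F_controlled[OF t] X unfolding commutant_def by blast
      have "adj (U t) * F t * U t * B = adj (U t) * (F t * (U t * adj (U t)) * X) * U t"
        by (simp add: B mult.assoc)
      also have "\<dots> = adj (U t) * (X * (U t * adj (U t)) * F t) * U t" by (simp add: uu fx)
      also have "\<dots> = B * (adj (U t) * F t * U t)" by (simp add: B mult.assoc)
      finally show "adj (U t) * F t * U t * B = B * (adj (U t) * F t * U t)" .
    qed
  qed
  show ?thesis using part1 part2 by blast
qed

end
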